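(* Let $\mathcal C\subseteq 2^{[n]}$ be a code and suppose that a neuron $i\in[n]$ is a piercing of $\mathcal C$ (i.e. a $k$-piercing for some $k$). Then $\mathcal C$ is inductively pierced if and only if $\mathcal C\setminus i$ is inductively pierced.
   Context: A code is a set $\mathcal C\subseteq 2^{[n]}$, $[n]=\{1,\dots,n\}$, elements of $[n]$ being neurons. Standing conventions: $\emptyset\in\mathcal C$; every neuron lies in some codeword; no two distinct neurons lie in exactly the same codewords. $\mathcal C\setminus i$ is obtained by removing $i$ from every codeword. For $\sigma\subseteq\tau$, $[\sigma,\tau]=\{\gamma:\sigma\subseteq\gamma\subseteq\tau\}$, of rank $|\tau\setminus\sigma|$. A neuron $i$ is a $k$-piercing of $\mathcal C$ if there are $\sigma\subseteq\tau\subseteq[n]\setminus\{i\}$ with $[\sigma,\tau]$ of rank $k$, $[\sigma,\tau]\subseteq\mathcal C\setminus i$, and $\mathcal C=(\mathcal C\setminus i)\cup[\sigma\cup\{i\},\tau\cup\{i\}]$. A code is $k$-inductively pierced if $\mathcal C=\{\emptyset\}$, or some neuron $j$ is a $k'$-piercing for some $k'\le k$ and $\mathcal C\setminus j$ is $k$-inductively pierced; inductively pierced means $k$-inductively pierced for some $k$. *)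

theory Defs
  imports Main
begin

definition is_code :: "nat \<Rightarrow> nat set set \<Rightarrow> bool" where
  "is_code n C \<longleftrightarrow>
     C \<subseteq> Pow {1..n} \<and> {} \<in> C \<and>
     (\<forall>j\<in>{1..n}. \<exists>c\<in>C. j \<in> c) \<and>
     (\<forall>j\<in>{1..n}. \<forall>l\<in>{1..n}. j \<noteq> l \<longrightarrow> {c\<in>C. j \<in> c} \<noteq> {c\<in>C. l \<in> c})"

definition code_del :: "nat set set \<Rightarrow> nat \<Rightarrow> nat set set" where
  "code_del C i = (\<lambda>c. c - {i}) ` C"

definition code_interval :: "nat set \<Rightarrow> nat set \<Rightarrow> nat set set" where
  "code_interval \<sigma> \<tau> = {\<gamma>. \<sigma> \<subseteq> \<gamma> \<and> \<gamma> \<subseteq> \<tau>}"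

text \<open>Neuron i is a k-piercing of C. (The requirement tau within [n] is implied by
tau being a codeword of C \ i.)\<close>
definition is_k_piercing :: "nat set set \<Rightarrow> nat \<Rightarrow> nat \<Rightarrow> bool" where
  "is_k_piercing C i k \<longleftrightarrow>
     (\<exists>\<sigma> \<tau>. \<sigma> \<subseteq> \<tau> \<and> i \<notin> \<tau> \<and> card (\<tau> - \<sigma>) = k \<and>
        code_interval \<sigma> \<tau> \<subseteq> code_del C i \<and>
        C = code_del C i \<union> code_interval (insert i \<sigma>) (insert i \<tau>))"

inductive k_ind_pierced :: "nat \<Rightarrow> nat set set \<Rightarrow> bool" where
  base: "k_ind_pierced k {{}}"
| step: "\<lbrakk>is_k_piercing C j k'; k' \<le> k; k_ind_pierced k (code_del C j)\<rbrakk>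
          \<Longrightarrow> k_ind_pierced k C"

definition ind_pierced :: "nat set set \<Rightarrow> bool" where
  "ind_pierced C \<longleftrightarrow> (\<exists>k. k_ind_pierced k C)"

end

theory Submission
  imports Defs
begin

lemma del_sub: "is_k_piercing C j k \<Longrightarrow> code_del C j \<subseteq> C"
  unfolding is_k_piercing_def by blast

lemma del_comm: "code_del (code_del C i) j = code_del (code_del C j) i"
  unfolding code_del_def image_image by (rule image_cong) auto

lemma del_pierce:
  assumes P: "is_k_piercing C j k" and ij: "i \<noteq> j"
  shows "\<exists>k'\<le>k. is_k_piercing (code_del C i) j k'"
proof -
  from P obtain \<rho> \<pi> where s: "\<rho> \<subseteq> \<pi>" and jp: "j \<notin> \<pi>" and ck: "card (\<pi> - \<rho>) = k"
    and I: "code_interval \<rho> \<pi> \<subseteq> code_del C j"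
    and Ceq: "C = code_del C j \<union> code_interval (insert j \<rho>) (insert j \<pi>)"
    unfolding is_k_piercing_def by blast
  define D where "D = code_del C i"
  have sub: "code_del C j \<subseteq> C" using del_sub[OF P] .
  have c1: "card ((\<pi> - {i}) - (\<rho> - {i})) \<le> k"
  proof -
    have "(\<pi> - {i}) - (\<rho> - {i}) = (\<pi> - \<rho>) - {i}" by blast
    moreover have "card ((\<pi> - \<rho>) - {i}) \<le> card (\<pi> - \<rho>)"
      by (metis card_Diff1_le card_Diff_singleton_if card.infinite le_refl)
    ultimately show ?thesis using ck by simp
  qed
  have c2: "code_interval (\<rho> - {i}) (\<pi> - {i}) \<subseteq> code_del D j"
  proof
    fix \<gamma> assume g: "\<gamma> \<in> code_interval (\<rho> - {i}) (\<pi> - {i})"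
    define \<delta> where "\<delta> = (if i \<in> \<rho> then insert i \<gamma> else \<gamma>)"
    have "\<delta> \<in> code_interval \<rho> \<pi>" using g s unfolding \<delta>_def code_interval_def by auto
    with I obtain c where c: "c \<in> C" "\<delta> = c - {j}" unfolding code_del_def by blast
    have "\<gamma> = (c - {i}) - {j}" using c(2) g ij unfolding \<delta>_def code_interval_def by (auto split: if_splits)
    thus "\<gamma> \<in> code_del D j" using c(1) unfolding D_def code_del_def by blast
  qed
  have c3: "D = code_del D j \<union> code_interval (insert j (\<rho> - {i})) (insert j (\<pi> - {i}))"
  proof (rule set_eqI, rule iffI)
    fix x assume "x \<in> D"
    then obtain c where c: "c \<in> C" "x = c - {i}" unfolding D_def code_del_def by blast
    show "x \<in> code_del D j \<union> code_interval (insert j (\<rho> - {i})) (insert j (\<pi> - {i}))"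
    proof (cases "j \<in> c")
      case True
      have "c \<notin> code_del C j" using True unfolding code_del_def by blast
      hence "c \<in> code_interval (insert j \<rho>) (insert j \<pi>)" using c(1) Ceq by blast
      hence "x \<in> code_interval (insert j (\<rho> - {i})) (insert j (\<pi> - {i}))"
        using c(2) ij unfolding code_interval_def by auto
      thus ?thesis by blast
    next
      case False
      have "x = x - {j}" using False c(2) by blast
      moreover have "x \<in> D" using c unfolding D_def code_del_def by blast
      ultimately show ?thesis unfolding code_del_def by blast
    qed
  next
    fix x assume x: "x \<in> code_del D j \<union> code_interval (insert j (\<rho> - {i})) (insert j (\<pi> - {i}))"
    show "x \<in> D"
    proof (cases "x \<in> code_del D j")
      case True
      hence "x \<in> code_del (code_del C j) i" using del_comm unfolding D_def by metis
      thus ?thesis using sub unfolding D_def code_del_def by blast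
    next
      case False
      hence g: "x \<in> code_interval (insert j (\<rho> - {i})) (insert j (\<pi> - {i}))" using x by blast
      define \<delta> where "\<delta> = (if i \<in> \<rho> then insert i x else x)"
      have "\<delta> \<in> code_interval (insert j \<rho>) (insert j \<pi>)" using g s ij
        unfolding \<delta>_def code_interval_def by auto
      hence "\<delta> \<in> C" using Ceq by blast
      moreover have "x = \<delta> - {i}" using g ij s unfolding \<delta>_def code_interval_def by auto
      ultimately show ?thesis unfolding D_def code_del_def by blast
    qed
  qed
  have "is_k_piercing D j (card ((\<pi> - {i}) - (\<rho> - {i})))"
    unfolding is_k_piercing_def
    apply (rule exI[of _ "\<rho> - {i}"], rule exI[of _ "\<pi> - {i}"])
    using s jp c2 c3 by blast
  thus ?thesis using c1 unfolding D_def by blast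
qed

lemma fwd: "k_ind_pierced k C \<Longrightarrow> k_ind_pierced k (code_del C i)"
proof (induction arbitrary: i rule: k_ind_pierced.induct)
  case (base k)
  have "code_del {{}} i = {{}}" unfolding code_del_def by auto
  thus ?case using k_ind_pierced.base by simp
next
  case (step C j k' k)
  show ?case
  proof (cases "i = j")
    case True thus ?thesis using step by simp
  next
    case False
    from del_pierce[OF step(1) False] obtain k'' where "k'' \<le> k'" "is_k_piercing (code_del C i) j k''"
      by blast
    moreover have "k_ind_pierced k (code_del (code_del C i) j)"
      using step(4)[of i] del_comm by metis
    ultimately show ?thesis using step(2) k_ind_pierced.step by (meson le_trans)
  qed
qed

lemma mono_k: "k_ind_pierced k C \<Longrightarrow> k \<le> m \<Longrightarrow> k_ind_pierced m C"
proof (induction rule: k_ind_pierced.induct)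
  case (base k) show ?case by (rule k_ind_pierced.base)
next
  case (step C j k' k) thus ?case by (meson k_ind_pierced.step le_trans)
qed

theorem proposition1p8:
  fixes n i :: nat and C :: "nat set set"
  assumes "is_code n C"
    and "i \<in> {1..n}"
    and "\<exists>k. is_k_piercing C i k"
  shows "ind_pierced C \<longleftrightarrow> ind_pierced (code_del C i)"
proof
  assume "ind_pierced C" thus "ind_pierced (code_del C i)"
    unfolding ind_pierced_def using fwd by blast
next
  assume "ind_pierced (code_del C i)"
  then obtain k where k: "k_ind_pierced k (code_del C i)" unfolding ind_pierced_def by blast
  obtain m where m: "is_k_piercing C i m" using assms(3) by blast
  have "k_ind_pierced (max k m) C"
    using k_ind_pierced.step[OF m _ mono_k[OF k]] by simp
  thus "ind_pierced C" unfolding ind_pierced_def by blast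
qed

end
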